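(* Let $f:\mathbb{R}^n\to(-\infty,+\infty]$ be proper and lower semicontinuous with $\bar x\in\operatorname{dom}f$, and let $g:\mathbb{R}^n\to(-\infty,+\infty]$ be convex and continuously differentiable on a neighborhood of $\bar x$. If $f$ is variationally convex at $\bar x$ for $\bar v\in\partial f(\bar x)$, then $f+g$ is variationally convex at $\bar x$ for $\bar v+\nabla g(\bar x)\in\partial(f+g)(\bar x)$.
   Context: $\partial$ is the limiting (Mordukhovich) subdifferential. A lsc $h$ is variationally convex at $\bar x$ for $\bar v\in\partial h(\bar x)$ if for some convex neighborhood $U\times V$ of $(\bar x,\bar v)$ there are a lsc convex function $\varphi\le h$ on $U$ and $\varepsilon>0$ such that $[U_\varepsilon\times V]\cap\operatorname{gph}\partial h=[U\times V]\cap\operatorname{gph}\partial\varphi$ and $h(x)=\varphi(x)$ at the common elements $(x,v)$, where $U_\varepsilon=\{x\in U:h(x)<h(\bar x)+\varepsilon\}$. *)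

theory Defs
  imports "HOL-Analysis.Analysis"
begin

definition proper_fun :: "('a \<Rightarrow> ereal) \<Rightarrow> bool" where
  "proper_fun f \<longleftrightarrow> (\<forall>x. f x \<noteq> -\<infinity>) \<and> (\<exists>x. f x \<noteq> \<infinity>)"

definition lsc_on :: "'a::topological_space set \<Rightarrow> ('a \<Rightarrow> ereal) \<Rightarrow> bool" where
  "lsc_on S f \<longleftrightarrow> (\<forall>x\<in>S. f x \<le> Liminf (at x within S) f)"

definition ext_convex_on :: "'a::real_vector set \<Rightarrow> ('a \<Rightarrow> ereal) \<Rightarrow> bool" where
  "ext_convex_on S f \<longleftrightarrow> convex S \<and>
     (\<forall>x\<in>S. \<forall>y\<in>S. \<forall>t::real. 0 < t \<and> t < 1 \<longrightarrow>
        f ((1 - t) *\<^sub>R x + t *\<^sub>R y) \<le> ereal (1 - t) * f x + ereal t * f y)"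

definition frechet_subdiff :: "('a::real_inner \<Rightarrow> ereal) \<Rightarrow> 'a \<Rightarrow> 'a set" where
  "frechet_subdiff f x = {v. \<bar>f x\<bar> \<noteq> \<infinity> \<and>
     (\<forall>e>0. \<exists>d>0. \<forall>y. norm (y - x) < d \<longrightarrow>
        f y \<ge> f x + ereal (v \<bullet> (y - x)) - ereal (e * norm (y - x)))}"

definition limiting_subdiff :: "('a::real_inner \<Rightarrow> ereal) \<Rightarrow> 'a \<Rightarrow> 'a set" where
  "limiting_subdiff f x = {v. \<bar>f x\<bar> \<noteq> \<infinity> \<and>
     (\<exists>xs vs. xs \<longlonglongrightarrow> x \<and> (\<lambda>k. f (xs k)) \<longlonglongrightarrow> f x \<and> vs \<longlonglongrightarrow> v \<and>
        (\<forall>k. vs k \<in> frechet_subdiff f (xs k)))}"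

definition var_convex_at :: "('a::real_inner \<Rightarrow> ereal) \<Rightarrow> 'a \<Rightarrow> 'a \<Rightarrow> bool" where
  "var_convex_at h xb vb \<longleftrightarrow> vb \<in> limiting_subdiff h xb \<and>
     (\<exists>U V \<phi> (\<epsilon>::real).
        open U \<and> convex U \<and> xb \<in> U \<and> open V \<and> convex V \<and> vb \<in> V \<and> \<epsilon> > 0 \<and>
        ext_convex_on U \<phi> \<and> lsc_on U \<phi> \<and> (\<forall>x\<in>U. \<phi> x \<noteq> -\<infinity> \<and> \<phi> x \<le> h x) \<and>
        {(x, v). x \<in> U \<and> h x < h xb + ereal \<epsilon> \<and> v \<in> V \<and> v \<in> limiting_subdiff h x}
          = {(x, v). x \<in> U \<and> v \<in> V \<and> v \<in> limiting_subdiff \<phi> x} \<and>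
        (\<forall>x v. x \<in> U \<and> v \<in> V \<and> v \<in> limiting_subdiff \<phi> x \<longrightarrow> h x = \<phi> x))"

end

theory Submission
  imports Defs
begin

lemma frechet_add_smooth:
  fixes F H :: "'a::real_inner \<Rightarrow> ereal"
  assumes v: "v \<in> frechet_subdiff F x" and W: "open W" "x \<in> W"
    and H: "\<forall>y\<in>W. H y = F y + ereal (gr y)"
    and d: "(gr has_derivative (\<lambda>u. a \<bullet> u)) (at x)"
  shows "v + a \<in> frechet_subdiff H x"
proof -
  from v have fin: "\<bar>F x\<bar> \<noteq> \<infinity>" and fr: "\<forall>e>0. \<exists>d>0. \<forall>y. norm (y - x) < d \<longrightarrow>
        F y \<ge> F x + ereal (v \<bullet> (y - x)) - ereal (e * norm (y - x))"
    unfolding frechet_subdiff_def by auto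
  obtain fx where fx: "F x = ereal fx" using fin by (cases "F x") auto
  have Hx: "H x = ereal (fx + gr x)" using H W fx by simp
  have "\<exists>d>0. \<forall>y. norm (y - x) < d \<longrightarrow>
        H y \<ge> H x + ereal ((v + a) \<bullet> (y - x)) - ereal (e * norm (y - x))" if e: "e > 0" for e
  proof -
    obtain d1 where d1: "d1 > 0" "\<forall>y. norm (y - x) < d1 \<longrightarrow>
        F y \<ge> F x + ereal (v \<bullet> (y - x)) - ereal (e/2 * norm (y - x))"
      using fr e by (meson half_gt_zero)
    obtain d2 where d2: "d2 > 0" "\<forall>y. norm (y - x) < d2 \<longrightarrow>
        norm (gr y - gr x - a \<bullet> (y - x)) \<le> e/2 * norm (y - x)"
      using d e unfolding has_derivative_at_alt by (meson half_gt_zero)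
    obtain d3 where d3: "d3 > 0" "ball x d3 \<subseteq> W" using W openE by blast
    show ?thesis
    proof (intro exI[of _ "min d1 (min d2 d3)"] conjI allI impI)
      show "min d1 (min d2 d3) > 0" using d1 d2 d3 by simp
      fix y assume y: "norm (y - x) < min d1 (min d2 d3)"
      have yW: "y \<in> W" using y d3 by (auto simp: dist_norm norm_minus_commute)
      have A: "F y \<ge> ereal (fx + v \<bullet> (y - x) - e/2 * norm (y - x))"
        using d1 y fx by simp
      have B: "gr y \<ge> gr x + a \<bullet> (y - x) - e/2 * norm (y - x)"
        using d2 y by (smt (verit) real_norm_def)
      show "H y \<ge> H x + ereal ((v + a) \<bullet> (y - x)) - ereal (e * norm (y - x))"
      proof (cases "F y")
        case (real r)
        then show ?thesis using A B H yW Hx by (simp add: inner_add_left)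
      next
        case PInf
        then show ?thesis using H yW by simp
      next
        case MInf
        then show ?thesis using A by simp
      qed
    qed
  qed
  moreover have "\<bar>H x\<bar> \<noteq> \<infinity>" using Hx by simp
  ultimately show ?thesis unfolding frechet_subdiff_def by blast
qed

lemma limiting_add_smooth:
  fixes F H :: "'a::real_inner \<Rightarrow> ereal"
  assumes v: "v \<in> limiting_subdiff F x" and W: "open W" "x \<in> W"
    and H: "\<forall>y\<in>W. H y = F y + ereal (gr y)"
    and d: "\<forall>y\<in>W. (gr has_derivative (\<lambda>u. G y \<bullet> u)) (at y)"
    and Gc: "continuous_on W G"
  shows "v + G x \<in> limiting_subdiff H x"
proof -
  from v have fin: "\<bar>F x\<bar> \<noteq> \<infinity>" unfolding limiting_subdiff_def by auto
  from v obtain xs vs where xs: "xs \<longlonglongrightarrow> x" and fl: "(\<lambda>k. F (xs k)) \<longlonglongrightarrow> F x"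
    and vs: "vs \<longlonglongrightarrow> v" and fr: "\<forall>k. vs k \<in> frechet_subdiff F (xs k)"
    unfolding limiting_subdiff_def by auto
  have "eventually (\<lambda>k. xs k \<in> W) sequentially"
    using xs W by (simp add: tendsto_def)
  then obtain N where N: "\<forall>k\<ge>N. xs k \<in> W" by (auto simp: eventually_sequentially)
  define xs' where "xs' k = xs (k + N)" for k
  define vs' where "vs' k = vs (k + N) + G (xs (k + N))" for k
  have xsW: "xs' k \<in> W" for k using N xs'_def by simp
  have xs': "xs' \<longlonglongrightarrow> x" unfolding xs'_def using xs by (rule LIMSEQ_ignore_initial_segment)
  have grc: "isCont gr x" using d W has_derivative_continuous by blast
  have Gx: "isCont G x" using Gc W continuous_on_eq_continuous_at by blast
  have g1: "(\<lambda>k. gr (xs' k)) \<longlonglongrightarrow> gr x" using grc xs' isCont_tendsto_compose by blast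
  have G1: "(\<lambda>k. G (xs' k)) \<longlonglongrightarrow> G x" using Gx xs' isCont_tendsto_compose by blast
  have f1: "(\<lambda>k. F (xs' k)) \<longlonglongrightarrow> F x" unfolding xs'_def using fl by (rule LIMSEQ_ignore_initial_segment)
  have "(\<lambda>k. F (xs' k) + ereal (gr (xs' k))) \<longlonglongrightarrow> F x + ereal (gr x)"
    using fin f1 g1 by (intro tendsto_add_ereal) auto
  hence h1: "(\<lambda>k. H (xs' k)) \<longlonglongrightarrow> H x" using H xsW W by simp
  have v1: "vs' \<longlonglongrightarrow> v + G x" unfolding vs'_def
    using LIMSEQ_ignore_initial_segment[OF vs, of N] G1 unfolding xs'_def by (intro tendsto_add) auto
  have fr1: "vs' k \<in> frechet_subdiff H (xs' k)" for k
    unfolding vs'_def using frechet_add_smooth[OF fr[rule_format, of "k+N"] W(1) _ H] xsW d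
    unfolding xs'_def by blast
  have "\<bar>H x\<bar> \<noteq> \<infinity>" using H W fin by auto
  then show ?thesis unfolding limiting_subdiff_def using xs' h1 v1 fr1 by blast
qed

lemma limiting_sub_smooth:
  fixes F H :: "'a::real_inner \<Rightarrow> ereal"
  assumes v: "v \<in> limiting_subdiff H x" and W: "open W" "x \<in> W"
    and H: "\<forall>y\<in>W. H y = F y + ereal (gr y)"
    and d: "\<forall>y\<in>W. (gr has_derivative (\<lambda>u. G y \<bullet> u)) (at y)"
    and Gc: "continuous_on W G"
  shows "v - G x \<in> limiting_subdiff F x"
proof -
  have H': "\<forall>y\<in>W. F y = H y + ereal (- gr y)"
  proof
    fix y assume "y \<in> W"
    then show "F y = H y + ereal (- gr y)" using H by (cases "F y") auto
  qed
  have d': "\<forall>y\<in>W. ((\<lambda>y. - gr y) has_derivative (\<lambda>u. (- G y) \<bullet> u)) (at y)"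
    using d by (auto intro: has_derivative_minus)
  have "v + (- G x) \<in> limiting_subdiff F x"
    using limiting_add_smooth[OF v W H' d'] Gc continuous_on_minus by blast
  then show ?thesis by simp
qed
lemma tendsto_roe:
  assumes "(f \<longlongrightarrow> x) F" "\<bar>x\<bar> \<noteq> \<infinity>"
  shows "((\<lambda>y. real_of_ereal (f y)) \<longlongrightarrow> real_of_ereal x) F"
proof -
  have "((\<lambda>y. ereal (real_of_ereal (f y))) \<longlongrightarrow> ereal (real_of_ereal x)) F"
    using tendsto_ereal_realI[OF assms(2,1)] assms(2) by (simp add: ereal_real)
  then show ?thesis by (simp only: lim_ereal)
qed

lemma frechet_convex_ineq:
  fixes \<phi> :: "'a::real_inner \<Rightarrow> ereal"
  assumes c: "ext_convex_on U \<phi>" and nm: "\<forall>z\<in>U. \<phi> z \<noteq> -\<infinity>"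
    and xU: "x \<in> U" and yU: "y \<in> U" and w: "w \<in> frechet_subdiff \<phi> x"
    and fy: "\<phi> y = ereal b"
  shows "real_of_ereal (\<phi> x) + w \<bullet> (y - x) \<le> b"
proof -
  from w have fin: "\<bar>\<phi> x\<bar> \<noteq> \<infinity>" and fr: "\<forall>e>0. \<exists>d>0. \<forall>z. norm (z - x) < d \<longrightarrow>
        \<phi> z \<ge> \<phi> x + ereal (w \<bullet> (z - x)) - ereal (e * norm (z - x))"
    unfolding frechet_subdiff_def by auto
  obtain a where fa: "\<phi> x = ereal a" using fin by (cases "\<phi> x") auto
  define n where "n = norm (y - x)"
  define Q where "Q = b - a - w \<bullet> (y - x)"
  have key: "Q \<ge> - e * n" if e: "e > 0" for e
  proof (cases "y = x")
    case True then show ?thesis using fa fy Q_def n_def by simp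
  next
    case False
    then have np: "n > 0" unfolding n_def by simp
    obtain d where d: "d > 0" "\<forall>z. norm (z - x) < d \<longrightarrow>
        \<phi> z \<ge> \<phi> x + ereal (w \<bullet> (z - x)) - ereal (e * norm (z - x))"
      using fr e by blast
    define t where "t = min (1/2) (d / (2 * n))"
    have t0: "0 < t" "t < 1" using d np by (auto simp: t_def)
    have "t \<le> d / (2 * n)" unfolding t_def by simp
    hence "t * n \<le> d / (2 * n) * n" using np by (intro mult_right_mono) auto
    also have "... = d / 2" using np by simp
    finally have tn: "t * n < d" using d by simp
    define z where "z = (1 - t) *\<^sub>R x + t *\<^sub>R y"
    have zx: "z - x = t *\<^sub>R (y - x)" unfolding z_def by (simp add: algebra_simps)
    have nz: "norm (z - x) = t * n" using zx t0 unfolding n_def by simp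
    have A: "\<phi> z \<ge> ereal (a + t * (w \<bullet> (y - x)) - e * (t * n))"
      using d(2)[rule_format, of z] nz tn fa zx by simp
    have "\<phi> z \<le> ereal (1 - t) * \<phi> x + ereal t * \<phi> y"
      using c xU yU t0 unfolding ext_convex_on_def z_def by blast
    hence B: "\<phi> z \<le> ereal ((1 - t) * a + t * b)" using fa fy by simp
    have "a + t * (w \<bullet> (y - x)) - e * (t * n) \<le> (1 - t) * a + t * b"
      using A B by (metis ereal_less_eq(3) order.trans)
    hence "t * (- e * n) \<le> t * Q" unfolding Q_def by (simp add: algebra_simps)
    then show ?thesis using t0 by (metis minus_mult_left mult_le_cancel_left_pos)
  qed
  have "Q \<ge> 0"
  proof (rule ccontr)
    assume "\<not> Q \<ge> 0"
    hence Qn: "Q < 0" by simp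
    hence "n > 0" using key[of 1] by (smt (verit) norm_ge_zero n_def)
    have e0: "- Q / (2 * n) > 0" using Qn \<open>n > 0\<close> by (simp add: divide_neg_pos)
    have "- (- Q / (2 * n)) * n = Q / 2" using \<open>n > 0\<close> by simp
    then have "Q \<ge> Q / 2" using key[OF e0] by simp
    then show False using Qn by simp
  qed
  then show ?thesis using fa Q_def by simp
qed

lemma limiting_convex_ineq:
  fixes \<phi> :: "'a::real_inner \<Rightarrow> ereal"
  assumes c: "ext_convex_on U \<phi>" and nm: "\<forall>z\<in>U. \<phi> z \<noteq> -\<infinity>" and U: "open U"
    and xU: "x \<in> U" and yU: "y \<in> U" and w: "w \<in> limiting_subdiff \<phi> x"
    and fy: "\<phi> y = ereal b"
  shows "real_of_ereal (\<phi> x) + w \<bullet> (y - x) \<le> b"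
proof -
  from w have fin: "\<bar>\<phi> x\<bar> \<noteq> \<infinity>" unfolding limiting_subdiff_def by auto
  from w obtain xs vs where xs: "xs \<longlonglongrightarrow> x" and fl: "(\<lambda>k. \<phi> (xs k)) \<longlonglongrightarrow> \<phi> x"
    and vs: "vs \<longlonglongrightarrow> w" and fr: "\<forall>k. vs k \<in> frechet_subdiff \<phi> (xs k)"
    unfolding limiting_subdiff_def by auto
  have "eventually (\<lambda>k. xs k \<in> U) sequentially"
    using xs U xU by (simp add: tendsto_def)
  hence ev: "eventually (\<lambda>k. real_of_ereal (\<phi> (xs k)) + vs k \<bullet> (y - xs k) \<le> b) sequentially"
    by eventually_elim (use frechet_convex_ineq[OF c nm _ yU _ fy] fr in blast)
  have "(\<lambda>k. real_of_ereal (\<phi> (xs k)) + vs k \<bullet> (y - xs k)) \<longlonglongrightarrow> real_of_ereal (\<phi> x) + w \<bullet> (y - x)"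
    by (intro tendsto_intros tendsto_roe fl fin vs xs)
  then show ?thesis using ev by (rule tendsto_upperbound) simp
qed
lemma psi_convex:
  fixes \<phi> g :: "'a::real_vector \<Rightarrow> ereal"
  assumes c: "ext_convex_on U \<phi>" and nm: "\<forall>z\<in>U. \<phi> z \<noteq> -\<infinity>"
    and cg: "ext_convex_on UNIV g" and gf: "\<forall>z\<in>U'. \<bar>g z\<bar> \<noteq> \<infinity>"
    and sub: "U' \<subseteq> U" and cv: "convex U'"
  shows "ext_convex_on U' (\<lambda>x. \<phi> x + g x)"
  unfolding ext_convex_on_def
proof (intro conjI cv ballI allI impI)
  fix x y t assume x: "x \<in> U'" and y: "y \<in> U'" and t: "0 < t \<and> t < (1::real)"
  define z where "z = (1 - t) *\<^sub>R x + t *\<^sub>R y"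
  have A: "\<phi> z \<le> ereal (1 - t) * \<phi> x + ereal t * \<phi> y"
    using c x y t sub unfolding ext_convex_on_def z_def by blast
  have B: "g z \<le> ereal (1 - t) * g x + ereal t * g y"
    using cg t unfolding ext_convex_on_def z_def by blast
  have "\<phi> z + g z \<le> (ereal (1 - t) * \<phi> x + ereal t * \<phi> y) + (ereal (1 - t) * g x + ereal t * g y)"
    using A B by (rule add_mono)
  also have "\<dots> = ereal (1 - t) * (\<phi> x + g x) + ereal t * (\<phi> y + g y)"
  proof -
    obtain a b where ab: "g x = ereal a" "g y = ereal b" using gf x y by (cases "g x"; cases "g y") auto
    have "\<phi> x \<noteq> -\<infinity>" "\<phi> y \<noteq> -\<infinity>" using nm sub x y by auto
    then show ?thesis using ab t
      by (cases "\<phi> x"; cases "\<phi> y") (auto simp: algebra_simps)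
  qed
  finally show "\<phi> ((1 - t) *\<^sub>R x + t *\<^sub>R y) + g ((1 - t) *\<^sub>R x + t *\<^sub>R y)
      \<le> ereal (1 - t) * (\<phi> x + g x) + ereal t * (\<phi> y + g y)" unfolding z_def .
qed

lemma psi_lsc:
  fixes \<phi> g :: "'a::real_normed_vector \<Rightarrow> ereal"
  assumes l: "lsc_on U \<phi>" and sub: "U' \<subseteq> U" "U' \<subseteq> W"
    and gW: "\<forall>z\<in>W. g z = ereal (gr z)" and gc: "\<forall>z\<in>W. isCont gr z"
    and nm: "\<forall>z\<in>U'. \<phi> z \<noteq> -\<infinity>"
  shows "lsc_on U' (\<lambda>x. \<phi> x + g x)"
  unfolding lsc_on_def
proof
  fix x assume x: "x \<in> U'"
  have inU: "eventually (\<lambda>y. y \<in> U') (at x within U')"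
    by (simp add: eventually_at_filter)
  have lx: "\<phi> x \<le> Liminf (at x within U) \<phi>" using l x sub unfolding lsc_on_def by auto
  have fle: "at x within U' \<le> at x within U" using sub(1) by (rule at_le)
  have gx: "g x = ereal (gr x)" using gW x sub by auto
  have gt: "(gr \<longlongrightarrow> gr x) (at x within U')"
    using gc x sub by (meson continuous_at_imp_continuous_within continuous_within subsetD)
  show "\<phi> x + g x \<le> Liminf (at x within U') (\<lambda>x. \<phi> x + g x)"
    unfolding le_Liminf_iff
  proof (intro allI impI)
    fix c assume c: "c < \<phi> x + g x"
    show "eventually (\<lambda>y. c < \<phi> y + g y) (at x within U')"
    proof (cases c)
      case MInf
      show ?thesis using inU
      proof eventually_elim
        case (elim y)
        then show ?case using MInf nm gW sub by (cases "\<phi> y") auto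
      qed
    next
      case PInf then show ?thesis using c by simp
    next
      case (real cr)
      have "ereal (cr - gr x) < \<phi> x" using c real gx by (cases "\<phi> x") auto
      then obtain z where z: "ereal (cr - gr x) < ereal z" "ereal z < \<phi> x"
        using ereal_dense2 by blast
      have e1: "eventually (\<lambda>y. ereal z < \<phi> y) (at x within U)"
        using lx z(2) unfolding le_Liminf_iff by blast
      have e1': "eventually (\<lambda>y. ereal z < \<phi> y) (at x within U')"
        using filter_leD[OF fle e1] .
      have dpos: "z + gr x - cr > 0" using z(1) by simp
      have e2: "eventually (\<lambda>y. dist (gr y) (gr x) < z + gr x - cr) (at x within U')"
        using tendstoD[OF gt dpos] .
      show ?thesis using e1' e2 inU
      proof eventually_elim
        case (elim y)
        have gy: "g y = ereal (gr y)" using gW elim(3) sub by auto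
        have "cr < z + gr y" using elim(2) by (simp add: dist_real_def abs_less_iff)
        then show ?case using elim(1) gy real by (cases "\<phi> y") auto
      qed
    qed
  qed
qed
theorem mainTheorem17:
  fixes f g :: "real^'n \<Rightarrow> ereal" and xb vb :: "real^'n" and W :: "(real^'n) set"
    and G :: "real^'n \<Rightarrow> real^'n"
  assumes "proper_fun f" and "lsc_on UNIV f" and "f xb < \<infinity>"
    and "\<forall>x. g x \<noteq> -\<infinity>" and "ext_convex_on UNIV g"
    and "open W" and "xb \<in> W" and "\<forall>x\<in>W. g x \<noteq> \<infinity>"
    and "\<forall>x\<in>W. ((\<lambda>y. real_of_ereal (g y)) has_derivative (\<lambda>u. G x \<bullet> u)) (at x)"
    and "continuous_on W G"
    and "var_convex_at f xb vb"
  shows "var_convex_at (\<lambda>x. f x + g x) xb (vb + G xb)"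
proof -
  note gconv = assms(5) and W = assms(6) and xbW = assms(7) and Gc = assms(10)
  define gr where "gr y = real_of_ereal (g y)" for y
  have gW: "\<forall>z\<in>W. g z = ereal (gr z)"
  proof
    fix z assume "z \<in> W"
    then show "g z = ereal (gr z)" using assms(4,8) unfolding gr_def by (cases "g z") auto
  qed
  have gd: "\<forall>y\<in>W. (gr has_derivative (\<lambda>u. G y \<bullet> u)) (at y)"
    using assms(9) unfolding gr_def by blast
  have gc: "\<forall>z\<in>W. isCont gr z" using gd has_derivative_continuous by blast
  define h where "h x = f x + g x" for x
  from assms(11) obtain U V \<phi> \<epsilon> where vb: "vb \<in> limiting_subdiff f xb"
    and UV: "open U" "convex U" "xb \<in> U" "open V" "convex V" "vb \<in> V" "\<epsilon> > 0"
    and phc: "ext_convex_on U \<phi>" and phl: "lsc_on U \<phi>"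
    and phle: "\<forall>x\<in>U. \<phi> x \<noteq> -\<infinity> \<and> \<phi> x \<le> f x"
    and Eq: "{(x, v). x \<in> U \<and> f x < f xb + ereal \<epsilon> \<and> v \<in> V \<and> v \<in> limiting_subdiff f x}
          = {(x, v). x \<in> U \<and> v \<in> V \<and> v \<in> limiting_subdiff \<phi> x}"
    and EqV: "\<forall>x v. x \<in> U \<and> v \<in> V \<and> v \<in> limiting_subdiff \<phi> x \<longrightarrow> f x = \<phi> x"
    unfolding var_convex_at_def by blast
  have EqP: "(x \<in> U \<and> f x < f xb + ereal \<epsilon> \<and> w \<in> V \<and> w \<in> limiting_subdiff f x) \<longleftrightarrow>
      (x \<in> U \<and> w \<in> V \<and> w \<in> limiting_subdiff \<phi> x)" for x w
  proof -
    have "(x, w) \<in> {(x, v). x \<in> U \<and> f x < f xb + ereal \<epsilon> \<and> v \<in> V \<and> v \<in> limiting_subdiff f x}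
      \<longleftrightarrow> (x, w) \<in> {(x, v). x \<in> U \<and> v \<in> V \<and> v \<in> limiting_subdiff \<phi> x}" using Eq by simp
    then show ?thesis by simp
  qed
  define \<psi> where "\<psi> x = \<phi> x + g x" for x
  have nmU: "\<forall>z\<in>U. \<phi> z \<noteq> -\<infinity>" using phle by blast
  obtain a0 where a0: "f xb = ereal a0"
    using vb unfolding limiting_subdiff_def by (cases "f xb") auto
  have "vb \<in> limiting_subdiff \<phi> xb \<and> f xb = \<phi> xb"
    using EqP[of xb vb] EqV[rule_format, of xb vb] UV vb a0 by simp
  hence vbp: "vb \<in> limiting_subdiff \<phi> xb" and pxb: "\<phi> xb = ereal a0" using a0 by auto
  obtain r where r: "r > 0" "ball vb r \<subseteq> V" using UV openE by blast
  obtain \<rho>1 where \<rho>1: "\<rho>1 > 0" "\<forall>y. dist y xb < \<rho>1 \<longrightarrow> dist (gr y) (gr xb) < \<epsilon> / 4"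
    using gc xbW UV(7) continuous_at_eps_delta by (metis divide_pos_pos zero_less_numeral)
  have Gcx: "isCont G xb" using Gc W xbW continuous_on_eq_continuous_at by blast
  obtain \<rho>2 where \<rho>2: "\<rho>2 > 0" "\<forall>y. dist y xb < \<rho>2 \<longrightarrow> dist (G y) (G xb) < r / 2"
    using Gcx r continuous_at_eps_delta by (metis half_gt_zero)
  obtain \<rho>3 where \<rho>3: "\<rho>3 > 0" "ball xb \<rho>3 \<subseteq> U \<inter> W"
    using open_Int[OF UV(1) W] UV(3) xbW openE by (metis IntI)
  define \<rho>4 where "\<rho>4 = \<epsilon> / (4 * (norm vb + r + 1))"
  have \<rho>4: "\<rho>4 > 0" unfolding \<rho>4_def using UV(7) r
    by (intro divide_pos_pos) (auto intro: add_nonneg_pos add_pos_pos)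
  define \<rho> where "\<rho> = min \<rho>1 (min \<rho>2 (min \<rho>3 \<rho>4))"
  have \<rho>: "\<rho> > 0" using \<rho>1 \<rho>2 \<rho>3 \<rho>4 by (simp add: \<rho>_def)
  define U' where "U' = ball xb \<rho>"
  define V' where "V' = ball (vb + G xb) (r / 2)"
  have U'UW: "U' \<subseteq> U" "U' \<subseteq> W" using \<rho>3 by (auto simp: U'_def \<rho>_def)
  have U'g: "\<bar>gr x - gr xb\<bar> < \<epsilon> / 4" if "x \<in> U'" for x
    using that \<rho>1 by (auto simp: U'_def \<rho>_def dist_commute dist_real_def)
  have U'G: "norm (G x - G xb) < r / 2" if "x \<in> U'" for x
    using that \<rho>2 by (auto simp: U'_def \<rho>_def dist_commute dist_norm)
  have U'n: "norm (x - xb) < \<rho>4" if "x \<in> U'" for x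
    using that by (auto simp: U'_def \<rho>_def dist_commute dist_norm)
  have VV: "v - G x \<in> V \<and> norm (v - G x - vb) < r" if "x \<in> U'" "v \<in> V'" for x v
  proof -
    have "norm (v - (vb + G xb)) < r / 2" using that(2) by (simp add: V'_def dist_norm norm_minus_commute)
    moreover have "v - G x - vb = (v - (vb + G xb)) - (G x - G xb)" by (simp add: algebra_simps)
    ultimately have "norm (v - G x - vb) \<le> norm (v - (vb + G xb)) + norm (G x - G xb)"
      using norm_triangle_ineq4[of "v - (vb + G xb)" "G x - G xb"] by metis
    then have "norm (v - G x - vb) < r" using U'G[OF that(1)] \<open>norm (v - (vb + G xb)) < r / 2\<close> by linarith
    then show ?thesis using r by (auto simp: dist_norm norm_minus_commute)
  qed
  have hW: "\<forall>y\<in>W. h y = f y + ereal (gr y)" using gW h_def by simp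
  have psW: "\<forall>y\<in>W. \<psi> y = \<phi> y + ereal (gr y)" using gW \<psi>_def by simp
  have hsub: "v - G x \<in> limiting_subdiff f x" if "x \<in> W" "v \<in> limiting_subdiff h x" for x v
    using limiting_sub_smooth[OF that(2) W that(1) hW gd Gc] .
  have hadd: "w + G x \<in> limiting_subdiff h x" if "x \<in> W" "w \<in> limiting_subdiff f x" for x w
    using limiting_add_smooth[OF that(2) W that(1) hW gd Gc] .
  have psub: "v - G x \<in> limiting_subdiff \<phi> x" if "x \<in> W" "v \<in> limiting_subdiff \<psi> x" for x v
    using limiting_sub_smooth[OF that(2) W that(1) psW gd Gc] .
  have padd: "w + G x \<in> limiting_subdiff \<psi> x" if "x \<in> W" "w \<in> limiting_subdiff \<phi> x" for x w
    using limiting_add_smooth[OF that(2) W that(1) psW gd Gc] .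
  have first: "vb + G xb \<in> limiting_subdiff h xb" using hadd[OF xbW vb] .
  have hxb: "h xb = ereal (a0 + gr xb)" using hW xbW a0 by simp
  have key: "(x \<in> U' \<and> h x < h xb + ereal (\<epsilon>/2) \<and> v \<in> V' \<and> v \<in> limiting_subdiff h x) \<longleftrightarrow>
      (x \<in> U' \<and> v \<in> V' \<and> v \<in> limiting_subdiff \<psi> x)" for x v
  proof
    assume A: "x \<in> U' \<and> h x < h xb + ereal (\<epsilon>/2) \<and> v \<in> V' \<and> v \<in> limiting_subdiff h x"
    have xU: "x \<in> U" and xW: "x \<in> W" using A U'UW by auto
    have w: "v - G x \<in> limiting_subdiff f x" using hsub xW A by blast
    obtain fx where fx: "f x = ereal fx" using w unfolding limiting_subdiff_def by (cases "f x") auto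
    have "fx + gr x < a0 + gr xb + \<epsilon>/2" using A hW xW fx hxb by simp
    hence "fx < a0 + \<epsilon>" using U'g[of x] A by linarith
    hence "f x < f xb + ereal \<epsilon>" using fx a0 by simp
    hence "v - G x \<in> limiting_subdiff \<phi> x" using EqP[of x "v - G x"] xU w VV[of x v] A by blast
    then have "v - G x + G x \<in> limiting_subdiff \<psi> x" using padd xW by blast
    then show "x \<in> U' \<and> v \<in> V' \<and> v \<in> limiting_subdiff \<psi> x" using A by simp
  next
    assume A: "x \<in> U' \<and> v \<in> V' \<and> v \<in> limiting_subdiff \<psi> x"
    have xU: "x \<in> U" and xW: "x \<in> W" using A U'UW by auto
    define w where "w = v - G x"
    have wp: "w \<in> limiting_subdiff \<phi> x" using psub xW A w_def by blast
    have wV: "w \<in> V" "norm (w - vb) < r" using VV A w_def by auto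
    have wf: "w \<in> limiting_subdiff f x" and fp: "f x = \<phi> x"
      using EqP[of x w] xU wV wp EqV by auto
    have hv: "v \<in> limiting_subdiff h x" using hadd[OF xW wf] w_def by simp
    obtain p where p: "\<phi> x = ereal p" using wp unfolding limiting_subdiff_def by (cases "\<phi> x") auto
    have ci: "p + w \<bullet> (xb - x) \<le> a0"
      using limiting_convex_ineq[OF phc nmU UV(1) xU UV(3) wp pxb] p by simp
    have "w \<bullet> (x - xb) \<le> norm w * norm (x - xb)" by (rule norm_cauchy_schwarz)
    also have "\<dots> \<le> (norm vb + r + 1) * \<rho>4"
    proof (rule mult_mono)
      show "norm w \<le> norm vb + r + 1" using wV(2) norm_triangle_ineq2[of w vb] by simp
      show "norm (x - xb) \<le> \<rho>4" using U'n A by (simp add: less_imp_le)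
    qed (use r in auto)
    also have "\<dots> = \<epsilon> / 4"
    proof -
      have "norm vb + r + 1 > 0" using r by (smt (verit) norm_ge_zero)
      then show ?thesis unfolding \<rho>4_def by (simp add: field_simps)
    qed
    finally have b1: "w \<bullet> (x - xb) \<le> \<epsilon> / 4" .
    have "w \<bullet> (xb - x) = - (w \<bullet> (x - xb))" by (simp add: inner_diff_right)
    hence "p + gr x < a0 + gr xb + \<epsilon> / 2" using ci b1 U'g[of x] A by linarith
    hence "h x < h xb + ereal (\<epsilon>/2)" using hW xW fp p hxb by simp
    then show "x \<in> U' \<and> h x < h xb + ereal (\<epsilon>/2) \<and> v \<in> V' \<and> v \<in> limiting_subdiff h x"
      using A hv by blast
  qed
  have SetEq: "{(x, v). x \<in> U' \<and> h x < h xb + ereal (\<epsilon>/2) \<and> v \<in> V' \<and> v \<in> limiting_subdiff h x}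
      = {(x, v). x \<in> U' \<and> v \<in> V' \<and> v \<in> limiting_subdiff \<psi> x}" using key by auto
  have last: "\<forall>x v. x \<in> U' \<and> v \<in> V' \<and> v \<in> limiting_subdiff \<psi> x \<longrightarrow> h x = \<psi> x"
  proof (intro allI impI)
    fix x v assume A: "x \<in> U' \<and> v \<in> V' \<and> v \<in> limiting_subdiff \<psi> x"
    have xU: "x \<in> U" and xW: "x \<in> W" using A U'UW by auto
    have "v - G x \<in> limiting_subdiff \<phi> x" using psub xW A by blast
    then have "f x = \<phi> x" using EqV xU VV A by blast
    then show "h x = \<psi> x" unfolding h_def \<psi>_def by simp
  qed
  have gfin: "\<forall>z\<in>U'. \<bar>g z\<bar> \<noteq> \<infinity>" using gW U'UW by auto
  have cvx: "ext_convex_on U' \<psi>" unfolding \<psi>_def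
    using psi_convex[OF phc nmU gconv gfin U'UW(1)] by (simp add: U'_def)
  have lsc: "lsc_on U' \<psi>" unfolding \<psi>_def
    using psi_lsc[OF phl U'UW gW gc] nmU U'UW by blast
  have below: "\<forall>x\<in>U'. \<psi> x \<noteq> -\<infinity> \<and> \<psi> x \<le> h x"
  proof
    fix x assume x: "x \<in> U'"
    then have "\<phi> x \<noteq> -\<infinity>" "\<phi> x \<le> f x" "g x = ereal (gr x)" using phle gW U'UW by auto
    then show "\<psi> x \<noteq> -\<infinity> \<and> \<psi> x \<le> h x" unfolding \<psi>_def h_def
      by (auto intro: add_right_mono)
  qed
  have opens: "open U'" "convex U'" "xb \<in> U'" "open V'" "convex V'" "vb + G xb \<in> V'" "\<epsilon>/2 > 0"
    using \<rho> r UV(7) by (auto simp: U'_def V'_def)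
  have "var_convex_at h xb (vb + G xb)"
    unfolding var_convex_at_def
    using first opens cvx lsc below SetEq last by blast
  then show ?thesis unfolding h_def by simp
qed

end
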